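(* There exists $C>0$ such that for all $\alpha\in[\frac23,1]$, $\beta\in[\frac2\alpha-2,1]$, $\kappa\in[\frac{2-\alpha}{\alpha(1+\beta)},1]$, and $\gamma,\bar\gamma\in C^{1,\beta}([0,1],\mathbf T^2)$ (of diameter at most $\frac14$), $$|\gamma;\bar\gamma|_\alpha\le C\Big[(|\dot\gamma|_\infty+|\dot{\bar\gamma}|_\infty)(|\dot\gamma|_{\mathrm{Hol}\,\beta}+|\dot{\bar\gamma}|_{\mathrm{Hol}\,\beta})^\kappa|\gamma-\bar\gamma|_\infty^{1-\kappa}\Big]^{\alpha/2}.$$
   Context: $\mathbf T^2=[-\frac12,\frac12)^2$ with geodesic distance. $C^{1,\beta}([0,1],\mathbf T^2)$ is the space of differentiable $\gamma$ with $\dot\gamma$ $\beta$-Hölder; $|\cdot|_\infty$ is the supremum norm and $|f|_{\mathrm{Hol}\,\beta}=\sup_{s\ne t}|f(s)-f(t)|/|s-t|^\beta$. For a path $\gamma$, $P_{sut}$ is the triangle with vertices $\gamma(s),\gamma(u),\gamma(t)$; for triangles $P_1,P_2$, $|P_1;P_2|$ is the area of the symmetric difference of the interiors if they have the same orientation and the sum of their areas otherwise. $|\gamma;\bar\gamma|_{[s,t]}=\sup_{u\in[s,t]}|P_{sut};\bar P_{sut}|^{1/2}$ and $|\gamma;\bar\gamma|_\alpha=\sup_D\sum_{[a,b]\in D}|\gamma;\bar\gamma|^\alpha_{[a,b]}$, the supremum over partitions $D$ of $[0,1]$ into consecutive closed subintervals. *)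

theory Defs
  imports "HOL-Analysis.Analysis"
begin

text \<open>The torus T^2 = [-1/2,1/2)^2. Paths into the torus are represented by
  their (continuous) lifts to the plane, real^2; all torus quantities are
  computed through the covering projection.\<close>

definition tproj :: "real^2 \<Rightarrow> real^2" where
  "tproj x = (\<chi> i. x$i - of_int (round (x$i)))"

definition tdist :: "real^2 \<Rightarrow> real^2 \<Rightarrow> real" where
  "tdist x y = sqrt (\<Sum>i\<in>UNIV. (x$i - y$i - of_int (round (x$i - y$i)))^2)"

definition vderiv :: "(real \<Rightarrow> real^2) \<Rightarrow> real \<Rightarrow> real^2" where
  "vderiv \<gamma> t = vector_derivative \<gamma> (at t within {0..1})"

definition C1_Hol :: "real \<Rightarrow> (real \<Rightarrow> real^2) \<Rightarrow> bool" where
  "C1_Hol \<beta> \<gamma> \<longleftrightarrow> (\<forall>t\<in>{0..1}. \<gamma> differentiable (at t within {0..1})) \<and>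
     (\<exists>H. \<forall>s\<in>{0..1}. \<forall>t\<in>{0..1}. norm (vderiv \<gamma> s - vderiv \<gamma> t) \<le> H * \<bar>s - t\<bar> powr \<beta>)"

definition deriv_sup :: "(real \<Rightarrow> real^2) \<Rightarrow> real" where
  "deriv_sup \<gamma> = (SUP t\<in>{0..1}. norm (vderiv \<gamma> t))"

definition deriv_hol :: "real \<Rightarrow> (real \<Rightarrow> real^2) \<Rightarrow> real" where
  "deriv_hol \<beta> \<gamma> = (SUP p\<in>{(s,t). s \<in> {0..1} \<and> t \<in> {0..1} \<and> s \<noteq> t}.
      norm (vderiv \<gamma> (fst p) - vderiv \<gamma> (snd p)) / \<bar>fst p - snd p\<bar> powr \<beta>)"

definition tsup_dist :: "(real \<Rightarrow> real^2) \<Rightarrow> (real \<Rightarrow> real^2) \<Rightarrow> real" where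
  "tsup_dist \<gamma> \<gamma>' = (SUP t\<in>{0..1}. tdist (\<gamma> t) (\<gamma>' t))"

definition tdiam_le :: "(real \<Rightarrow> real^2) \<Rightarrow> real \<Rightarrow> bool" where
  "tdiam_le \<gamma> r \<longleftrightarrow> (\<forall>s\<in>{0..1}. \<forall>t\<in>{0..1}. tdist (\<gamma> s) (\<gamma> t) \<le> r)"

text \<open>Signed (doubled) area; its sign is the orientation of the triangle.\<close>
definition orient :: "real^2 \<Rightarrow> real^2 \<Rightarrow> real^2 \<Rightarrow> real" where
  "orient a b c = (b-a)$1 * (c-a)$2 - (b-a)$2 * (c-a)$1"

definition ttri :: "real^2 \<Rightarrow> real^2 \<Rightarrow> real^2 \<Rightarrow> (real^2) set" where
  "ttri a b c = tproj ` interior (convex hull {a, b, c})"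

definition tri_dist :: "real^2 \<Rightarrow> real^2 \<Rightarrow> real^2 \<Rightarrow> real^2 \<Rightarrow> real^2 \<Rightarrow> real^2 \<Rightarrow> real" where
  "tri_dist a b c a' b' c' =
     (if orient a b c * orient a' b' c' > 0
      then measure lebesgue ((ttri a b c - ttri a' b' c') \<union> (ttri a' b' c' - ttri a b c))
      else measure lebesgue (ttri a b c) + measure lebesgue (ttri a' b' c'))"

definition loc_dist :: "(real \<Rightarrow> real^2) \<Rightarrow> (real \<Rightarrow> real^2) \<Rightarrow> real \<Rightarrow> real \<Rightarrow> real" where
  "loc_dist \<gamma> \<gamma>' s t = (SUP u\<in>{s..t}.
      sqrt (tri_dist (\<gamma> s) (\<gamma> u) (\<gamma> t) (\<gamma>' s) (\<gamma>' u) (\<gamma>' t)))"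

definition partitions01 :: "real list set" where
  "partitions01 = {ts. sorted_wrt (<) ts \<and> ts \<noteq> [] \<and> hd ts = 0 \<and> last ts = 1}"

definition pvar :: "real \<Rightarrow> (real \<Rightarrow> real^2) \<Rightarrow> (real \<Rightarrow> real^2) \<Rightarrow> ereal" where
  "pvar \<alpha> \<gamma> \<gamma>' = (SUP ts\<in>partitions01.
      ereal (\<Sum>i<length ts - 1. loc_dist \<gamma> \<gamma>' (ts!i) (ts!(i+1)) powr \<alpha>))"

end

theory Submission
  imports Defs
begin


definition cross :: "real^2 \<Rightarrow> real^2 \<Rightarrow> real" where
  "cross u v = u$1 * v$2 - u$2 * v$1"

lemma orient_cross: "orient a b c = cross (b - a) (c - a)"
  by (simp add: orient_def cross_def)

lemma norm2: "norm (x::real^2) = sqrt ((x$1)^2 + (x$2)^2)"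
  by (simp add: norm_vec_def L2_set_def sum_2)

lemma cross_bound: "\<bar>cross u v\<bar> \<le> norm u * norm v"
proof -
  have "(cross u v)^2 \<le> ((u$1)^2 + (u$2)^2) * ((v$1)^2 + (v$2)^2)"
  proof -
    have "((u$1)^2 + (u$2)^2) * ((v$1)^2 + (v$2)^2) = (cross u v)^2 + (u$1 * v$1 + u$2 * v$2)^2"
      unfolding cross_def by (simp add: algebra_simps power2_eq_square)
    then show ?thesis by simp
  qed
  then have "sqrt ((cross u v)^2) \<le> sqrt (((u$1)^2 + (u$2)^2) * ((v$1)^2 + (v$2)^2))"
    using real_sqrt_le_mono by blast
  then show ?thesis by (simp add: norm2 real_sqrt_mult)
qed

lemma tri_area: "measure lebesgue (convex hull {a, b, c::real^2}) = \<bar>orient a b c\<bar> / 2"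
proof -
  have "measure lebesgue (convex hull {a, b, c}) = Henstock_Kurzweil_Integration.content (convex hull {a, b, c})"
    using finite_imp_compact_convex_hull[of "{a,b,c}"]
    by (intro measure_completion) (auto dest: compact_imp_closed)
  also have "\<dots> = \<bar>orient a b c\<bar> / 2"
    by (simp add: content_triangle orient_def algebra_simps)
  finally show ?thesis .
qed

lemma bary_real:
  fixes u1 u2 v1 v2 w1 w2 :: real
  assumes "u1 * v2 - u2 * v1 \<noteq> 0"
  shows "((w1 * v2 - w2 * v1) / (u1 * v2 - u2 * v1)) * u1 + ((u1 * w2 - u2 * w1) / (u1 * v2 - u2 * v1)) * v1 = w1"
    "((w1 * v2 - w2 * v1) / (u1 * v2 - u2 * v1)) * u2 + ((u1 * w2 - u2 * w1) / (u1 * v2 - u2 * v1)) * v2 = w2"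
proof -
  have "(w1 * v2 - w2 * v1) * u1 + (u1 * w2 - u2 * w1) * v1 = w1 * (u1 * v2 - u2 * v1)"
    by (simp add: algebra_simps)
  then show "((w1 * v2 - w2 * v1) / (u1 * v2 - u2 * v1)) * u1 + ((u1 * w2 - u2 * w1) / (u1 * v2 - u2 * v1)) * v1 = w1"
    using assms by (simp add: divide_simps)
  have "(w1 * v2 - w2 * v1) * u2 + (u1 * w2 - u2 * w1) * v2 = w2 * (u1 * v2 - u2 * v1)"
    by (simp add: algebra_simps)
  then show "((w1 * v2 - w2 * v1) / (u1 * v2 - u2 * v1)) * u2 + ((u1 * w2 - u2 * w1) / (u1 * v2 - u2 * v1)) * v2 = w2"
    using assms by (simp add: divide_simps)
qed

lemma bary:
  fixes a b c p :: "real^2"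
  assumes "orient a b c \<noteq> 0"
  obtains ma mb mc where "ma + mb + mc = 1" "p = ma *\<^sub>R a + mb *\<^sub>R b + mc *\<^sub>R c"
proof -
  define u where "u = b - a"
  define v where "v = c - a"
  define w where "w = p - a"
  have d: "u$1 * v$2 - u$2 * v$1 \<noteq> 0" using assms by (simp add: orient_def u_def v_def)
  define mb where "mb = (w$1 * v$2 - w$2 * v$1) / (u$1 * v$2 - u$2 * v$1)"
  define mc where "mc = (u$1 * w$2 - u$2 * w$1) / (u$1 * v$2 - u$2 * v$1)"
  have "w = mb *\<^sub>R u + mc *\<^sub>R v"
    unfolding vec_eq_iff forall_2 using bary_real[OF d, of "w$1" "w$2"] by (simp add: mb_def mc_def)
  then have "p = (1 - mb - mc) *\<^sub>R a + mb *\<^sub>R b + mc *\<^sub>R c"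
    unfolding u_def v_def w_def by (simp add: algebra_simps)
  then show ?thesis using that[of "1 - mb - mc" mb mc] by simp
qed

lemma cover_key:
  fixes a b c p x :: "real^2"
  assumes "la \<ge> 0" "lb \<ge> 0" "lc \<ge> 0" "la + lb + lc = 1" "ma + mb + mc = 1"
    "x = la *\<^sub>R a + lb *\<^sub>R b + lc *\<^sub>R c" "p = ma *\<^sub>R a + mb *\<^sub>R b + mc *\<^sub>R c"
    "ma > 0" "mb > 0 \<Longrightarrow> la / ma \<le> lb / mb" "mc > 0 \<Longrightarrow> la / ma \<le> lc / mc"
  shows "x \<in> convex hull {p, b, c}"
proof -
  define t where "t = la / ma"
  have t0: "t \<ge> 0" using assms by (simp add: t_def)
  have hb: "lb - t * mb \<ge> 0"
  proof (cases "mb > 0")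
    case True
    then show ?thesis using assms(9)[OF True] by (simp add: t_def field_simps)
  next
    case False then show ?thesis using t0 assms(2) by (smt (verit) mult_nonneg_nonpos)
  qed
  have hc: "lc - t * mc \<ge> 0"
  proof (cases "mc > 0")
    case True
    then show ?thesis using assms(10)[OF True] by (simp add: t_def field_simps)
  next
    case False then show ?thesis using t0 assms(3) by (smt (verit) mult_nonneg_nonpos)
  qed
  have tma: "t * ma = la" using assms(8) by (simp add: t_def)
  have "x = t *\<^sub>R p + (lb - t * mb) *\<^sub>R b + (lc - t * mc) *\<^sub>R c"
    using assms(6,7) tma by (simp add: algebra_simps scaleR_add_right)
  moreover have "t + (lb - t * mb) + (lc - t * mc) = 1"
  proof -
    have "t * (ma + mb + mc) = t" using assms(5) by simp
    then show ?thesis using tma assms(4) by (simp add: algebra_simps)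
  qed
  ultimately show ?thesis unfolding convex_hull_3 using t0 hb hc by blast
qed

lemma cover3:
  fixes a b c p :: "real^2"
  assumes "orient a b c \<noteq> 0"
  shows "convex hull {a, b, c} \<subseteq> convex hull {p, b, c} \<union> convex hull {a, p, c} \<union> convex hull {a, b, p}"
proof
  fix x assume "x \<in> convex hull {a, b, c}"
  then obtain la lb lc where l: "la \<ge> 0" "lb \<ge> 0" "lc \<ge> 0" "la + lb + lc = 1"
    "x = la *\<^sub>R a + lb *\<^sub>R b + lc *\<^sub>R c" unfolding convex_hull_3 by blast
  obtain ma mb mc where m: "ma + mb + mc = 1" "p = ma *\<^sub>R a + mb *\<^sub>R b + mc *\<^sub>R c"
    using bary[OF assms] by blast
  have A: "x \<in> convex hull {p, b, c}" if "ma > 0" "mb > 0 \<Longrightarrow> la / ma \<le> lb / mb" "mc > 0 \<Longrightarrow> la / ma \<le> lc / mc"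
    using cover_key[OF l(1-4) m(1) l(5) m(2) that] .
  have B: "x \<in> convex hull {a, p, c}" if "mb > 0" "ma > 0 \<Longrightarrow> lb / mb \<le> la / ma" "mc > 0 \<Longrightarrow> lb / mb \<le> lc / mc"
  proof -
    have "x \<in> convex hull {p, a, c}"
      using cover_key[of lb la lc mb ma mc x b a c p] l m that by (simp add: algebra_simps)
    then show ?thesis by (simp add: insert_commute)
  qed
  have C: "x \<in> convex hull {a, b, p}" if "mc > 0" "ma > 0 \<Longrightarrow> lc / mc \<le> la / ma" "mb > 0 \<Longrightarrow> lc / mc \<le> lb / mb"
  proof -
    have "x \<in> convex hull {p, a, b}"
      using cover_key[of lc la lb mc ma mb x c a b p] l m that by (simp add: algebra_simps)
    then show ?thesis by (simp add: insert_commute)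
  qed
  show "x \<in> convex hull {p, b, c} \<union> convex hull {a, p, c} \<union> convex hull {a, b, p}"
  proof -
    have "(ma > 0 \<and> (mb > 0 \<longrightarrow> la / ma \<le> lb / mb) \<and> (mc > 0 \<longrightarrow> la / ma \<le> lc / mc)) \<or>
          (mb > 0 \<and> (ma > 0 \<longrightarrow> lb / mb \<le> la / ma) \<and> (mc > 0 \<longrightarrow> lb / mb \<le> lc / mc)) \<or>
          (mc > 0 \<and> (ma > 0 \<longrightarrow> lc / mc \<le> la / ma) \<and> (mb > 0 \<longrightarrow> lc / mc \<le> lb / mb))"
      using m(1) by linarith
    then show ?thesis using A B C by blast
  qed
qed



lemma meas_le:
  assumes "A \<subseteq> B" "B \<in> lmeasurable"
  shows "measure lebesgue A \<le> measure lebesgue B"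
proof (cases "A \<in> sets lebesgue")
  case True
  then show ?thesis using assms by (meson measure_mono_fmeasurable)
next
  case False
  then show ?thesis by (simp add: measure_notin_sets)
qed

lemma round_add_int: "round (x + of_int n) = round x + n"
  by (rule round_unique) (use of_int_round_gt[of x] of_int_round_le[of x] in auto)

definition rv :: "real^2 \<Rightarrow> real^2" where
  "rv x = (\<chi> i. of_int (round (x$i)))"

lemma tproj_rv: "tproj x = x - rv x"
  by (simp add: tproj_def rv_def vec_eq_iff)

definition isint :: "real^2 \<Rightarrow> bool" where
  "isint k \<longleftrightarrow> (\<forall>i. k$i \<in> \<int>)"

lemma tproj_shift: "isint k \<Longrightarrow> tproj (x + k) = tproj x"
proof -
  assume "isint k"
  then have "\<forall>i. \<exists>n. k$i = of_int n" unfolding isint_def by (meson Ints_cases)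
  then obtain n where n: "\<And>i. k$i = of_int (n i)" by metis
  show ?thesis unfolding tproj_def vec_eq_iff using n by (simp add: round_add_int)
qed

definition Jset :: "(int \<times> int) set" where "Jset = {-3..3} \<times> {-3..3}"

definition vj :: "real^2 \<Rightarrow> int \<times> int \<Rightarrow> real^2" where
  "vj p j = rv p + (\<chi> i. if i = 1 then of_int (fst j) else of_int (snd j))"

definition Ucov :: "real^2 \<Rightarrow> (real^2) set \<Rightarrow> (real^2) set" where
  "Ucov p E = (\<Union>j\<in>Jset. (\<lambda>x. x - vj p j) ` E)"

lemma card_Jset: "card Jset = 49" "finite Jset"
  by (simp_all add: Jset_def card_cartesian_product)

lemma round_close:
  assumes "\<bar>x - y\<bar> \<le> (2::real)"
  shows "round x - round y \<in> {-3..3}"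
proof -
  have h: "of_int (round x) \<le> x + 1/2" "x - 1/2 < of_int (round x)"
    "of_int (round y) \<le> y + 1/2" "y - 1/2 < of_int (round y)"
    by (rule of_int_round_le of_int_round_gt)+
  have "x - y \<le> 2" "y - x \<le> 2" using assms by (simp_all add: abs_le_iff)
  then have "real_of_int (round x) - real_of_int (round y) < 4"
    "real_of_int (round y) - real_of_int (round x) < 4" using h by linarith+
  then have "real_of_int (round x - round y) < real_of_int 4" "real_of_int (round y - round x) < real_of_int 4"
    by simp_all
  then have "round x - round y < 4" "round y - round x < 4" by (simp_all only: of_int_less_iff)
  then show ?thesis by auto
qed

lemma tproj_Ucov:
  assumes "F \<subseteq> E" "E \<subseteq> cball p 2"
  shows "tproj ` F \<subseteq> Ucov p E"
proof
  fix y assume "y \<in> tproj ` F"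
  then obtain x where x: "x \<in> F" "y = tproj x" by blast
  then have "dist p x \<le> 2" using assms by auto
  then have d: "\<bar>x$i - p$i\<bar> \<le> 2" for i
    by (metis component_le_norm_cart dist_commute dist_norm order_trans vector_minus_component)
  define j where "j = (round (x$1) - round (p$1), round (x$2) - round (p$2))"
  have jJ: "j \<in> Jset" unfolding Jset_def j_def using round_close[OF d] by auto
  have "vj p j = rv x"
    unfolding vj_def rv_def j_def vec_eq_iff by (auto simp: forall_2)
  then have "y = x - vj p j" using x by (simp add: tproj_rv)
  then show "y \<in> Ucov p E" unfolding Ucov_def using jJ x assms(1) by blast
qed

lemma Ucov_meas:
  assumes "E \<in> lmeasurable"
  shows "Ucov p E \<in> lmeasurable" "measure lebesgue (Ucov p E) \<le> 49 * measure lebesgue E"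
proof -
  show "Ucov p E \<in> lmeasurable" unfolding Ucov_def
    by (intro fmeasurable.finite_UN card_Jset measurable_translation_subtract assms)
  have "measure lebesgue (Ucov p E) \<le> (\<Sum>j\<in>Jset. measure lebesgue ((\<lambda>x. x - vj p j) ` E))"
    unfolding Ucov_def
    by (intro measure_UNION_le card_Jset) (use measurable_translation_subtract[OF assms] in auto)
  also have "\<dots> = 49 * measure lebesgue E"
    by (simp add: measure_translation_subtract card_Jset)
  finally show "measure lebesgue (Ucov p E) \<le> 49 * measure lebesgue E" .
qed

lemma proj_bound1:
  assumes "X \<subseteq> tproj ` F" "F \<subseteq> E" "E \<subseteq> cball p 2" "E \<in> lmeasurable"
  shows "measure lebesgue X \<le> 49 * measure lebesgue E"
  using meas_le[OF order_trans[OF assms(1) tproj_Ucov[OF assms(2,3)]] Ucov_meas(1)[OF assms(4)]]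
    Ucov_meas(2)[OF assms(4), of p] by linarith

lemma proj_bound2:
  assumes "X \<subseteq> tproj ` F1 \<union> tproj ` F2" "F1 \<subseteq> E1" "E1 \<subseteq> cball p1 2" "E1 \<in> lmeasurable"
    "F2 \<subseteq> E2" "E2 \<subseteq> cball p2 2" "E2 \<in> lmeasurable"
  shows "measure lebesgue X \<le> 49 * (measure lebesgue E1 + measure lebesgue E2)"
proof -
  have s: "X \<subseteq> Ucov p1 E1 \<union> Ucov p2 E2"
    using assms(1) tproj_Ucov[OF assms(2,3)] tproj_Ucov[OF assms(5,6)] by blast
  have "measure lebesgue X \<le> measure lebesgue (Ucov p1 E1 \<union> Ucov p2 E2)"
    by (rule meas_le[OF s]) (intro fmeasurable.Un Ucov_meas assms)
  also have "\<dots> \<le> measure lebesgue (Ucov p1 E1) + measure lebesgue (Ucov p2 E2)"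
    by (intro measure_Un_le fmeasurableD Ucov_meas assms)
  finally show ?thesis using Ucov_meas(2)[OF assms(4), of p1] Ucov_meas(2)[OF assms(7), of p2]
    unfolding distrib_left by linarith
qed



lemma hull_lmeas: "convex hull {x, y, z::real^2} \<in> lmeasurable"
  by (intro lmeasurable_compact finite_imp_compact_convex_hull) auto

lemma Un_meas:
  assumes "A \<in> lmeasurable" "B \<in> lmeasurable" "measure lebesgue A \<le> x" "measure lebesgue B \<le> y"
  shows "A \<union> B \<in> lmeasurable" "measure lebesgue (A \<union> B) \<le> x + y"
proof -
  show "A \<union> B \<in> lmeasurable" using assms by (intro fmeasurable.Un)
  have "measure lebesgue (A \<union> B) \<le> measure lebesgue A + measure lebesgue B"
    by (intro measure_Un_le fmeasurableD assms)
  then show "measure lebesgue (A \<union> B) \<le> x + y" using assms by linarith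
qed

definition Gs :: "real^2 \<Rightarrow> real^2 \<Rightarrow> real^2 \<Rightarrow> real^2 \<Rightarrow> (real^2) set" where
  "Gs x y z x' = convex hull {x, x', y} \<union> convex hull {x, x', z} \<union>
     (if orient x y z = 0 then convex hull {x, y, z} else {})"

lemma Gs_step: "convex hull {x, y, z} - convex hull {x', y, z} \<subseteq> Gs x y z x'"
proof (cases "orient x y z = 0")
  case True then show ?thesis unfolding Gs_def by auto
next
  case False
  have "convex hull {x, y, z} \<subseteq> convex hull {x', y, z} \<union> convex hull {x, x', z} \<union> convex hull {x, y, x'}"
    using cover3[OF False, of x'] .
  moreover have "convex hull {x, y, x'} = convex hull {x, x', y}" by (simp add: insert_commute)
  ultimately show ?thesis unfolding Gs_def by auto
qed

lemma orient_bound: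
  assumes "norm (x' - x) \<le> d" "norm (y - x) \<le> m"
  shows "\<bar>orient x x' y\<bar> \<le> d * m"
proof -
  have "\<bar>orient x x' y\<bar> \<le> norm (x' - x) * norm (y - x)"
    unfolding orient_cross by (rule cross_bound)
  also have "\<dots> \<le> d * m" using assms order_trans[OF norm_ge_zero assms(1)] by (intro mult_mono) auto
  finally show ?thesis .
qed

lemma Gs_meas:
  assumes "norm (x' - x) \<le> d" "norm (y - x) \<le> m" "norm (z - x) \<le> m"
  shows "Gs x y z x' \<in> lmeasurable" "measure lebesgue (Gs x y z x') \<le> d * m"
proof -
  have m1: "measure lebesgue (convex hull {x, x', y}) \<le> d * m / 2"
    using orient_bound[OF assms(1,2)] by (simp add: tri_area)
  have m2: "measure lebesgue (convex hull {x, x', z}) \<le> d * m / 2"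
    using orient_bound[OF assms(1,3)] by (simp add: tri_area)
  have m3: "measure lebesgue (if orient x y z = 0 then convex hull {x, y, z} else {}) \<le> 0"
    by (simp add: tri_area)
  have l3: "(if orient x y z = 0 then convex hull {x, y, z} else {}) \<in> lmeasurable"
    using hull_lmeas by simp
  note u1 = Un_meas[OF hull_lmeas hull_lmeas m1 m2]
  note u2 = Un_meas[OF u1(1) l3 u1(2) m3]
  show "Gs x y z x' \<in> lmeasurable" using u2(1) unfolding Gs_def .
  show "measure lebesgue (Gs x y z x') \<le> d * m" using u2(2) unfolding Gs_def by simp
qed

lemma hull_sub_cball:
  fixes p :: "real^2"
  assumes "x \<in> cball p r" "y \<in> cball p r" "z \<in> cball p r"
  shows "convex hull {x, y, z} \<subseteq> cball p r"
  using assms hull_minimal[of "{x,y,z}" "cball p r" convex] convex_cball[of p r] by auto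

lemma Gs_sub:
  assumes "x \<in> cball p r" "y \<in> cball p r" "z \<in> cball p r" "x' \<in> cball p r"
  shows "Gs x y z x' \<subseteq> cball p r"
proof -
  have "convex hull {x, x', y} \<subseteq> cball p r" "convex hull {x, x', z} \<subseteq> cball p r"
    "convex hull {x, y, z} \<subseteq> cball p r"
    using assms by (intro hull_sub_cball; simp)+
  then show ?thesis unfolding Gs_def by auto
qed

lemma frontier_tri: "convex hull {x, y, z::real^2} - interior (convex hull {x, y, z}) = frontier (convex hull {x, y, z})"
proof -
  have "closed (convex hull {x, y, z})"
    by (intro compact_imp_closed finite_imp_compact_convex_hull) auto
  then show ?thesis by (simp add: frontier_def)
qed

lemma frontier_tri_neg: "negligible (frontier (convex hull {x, y, z::real^2}))"
  by (intro negligible_convex_frontier convex_convex_hull)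

lemma fr_cball:
  fixes p :: "real^2"
  assumes "x \<in> cball p r" "y \<in> cball p r" "z \<in> cball p r"
  shows "frontier (convex hull {x, y, z}) \<subseteq> cball p r"
  using hull_sub_cball[OF assms] frontier_tri[of x y z] by blast

lemma chain_bound:
  fixes a b c a2 b2 c2 :: "real^2"
  assumes d: "norm (a2 - a) \<le> d" "norm (b2 - b) \<le> d" "norm (c2 - c) \<le> d"
    and l: "norm (b - a) \<le> l" "norm (c - a) \<le> l" "norm (c - b) \<le> l"
    and "l \<le> 1/2" "d \<le> 1/2"
  obtains E where
    "(interior (convex hull {a, b, c}) - interior (convex hull {a2, b2, c2})) \<union>
     (interior (convex hull {a2, b2, c2}) - interior (convex hull {a, b, c})) \<subseteq> E"
    "E \<subseteq> cball a 2" "E \<in> lmeasurable" "measure lebesgue E \<le> 6 * (d * (l + 2 * d))"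
proof -
  let ?m = "l + 2 * d"
  have nc: "norm (x - y) = norm (y - x)" for x y :: "real^2" by (rule norm_minus_commute)
  have d0: "d \<ge> 0" using d(1) norm_ge_zero order_trans by blast
  have dd: "norm (a - a2) \<le> d" "norm (b - b2) \<le> d" "norm (c - c2) \<le> d"
    using d by (simp_all add: norm_minus_commute)
  have P: "norm (x - y) \<le> ?m" if hx: "x \<in> {a, b, c, a2, b2, c2}" and hy: "y \<in> {a, b, c, a2, b2, c2}" for x y
  proof -
    have t: "norm (u - v) \<le> norm (u - w) + norm (w - v)" for u v w :: "real^2"
      by (metis diff_add_cancel norm_triangle_ineq add_diff_eq diff_diff_eq2)
    have base: "norm (x' - y') \<le> l" if "x' \<in> {a, b, c}" "y' \<in> {a, b, c}" for x' y'
    proof -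
      have l0: "l \<ge> 0" using l(1) norm_ge_zero order_trans by blast
      have "norm (a - b) \<le> l" "norm (a - c) \<le> l" "norm (b - c) \<le> l"
        using l by (simp_all add: norm_minus_commute)
      then show ?thesis using that l l0 by auto
    qed
    have "\<exists>x0\<in>{a, b, c}. norm (x - x0) \<le> d" using hx d d0 by auto
    then obtain x0 where x0: "x0 \<in> {a, b, c}" "norm (x - x0) \<le> d" by blast
    have "\<exists>y0\<in>{a, b, c}. norm (y0 - y) \<le> d" using hy dd d0 by auto
    then obtain y0 where y0: "y0 \<in> {a, b, c}" "norm (y0 - y) \<le> d" by blast
    have "norm (x - y) \<le> norm (x - x0) + norm (x0 - y)" by (rule t)
    also have "norm (x0 - y) \<le> norm (x0 - y0) + norm (y0 - y)" by (rule t)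
    finally show ?thesis using x0 y0 base[OF x0(1) y0(1)] by linarith
  qed
  define E where "E = Gs a b c a2 \<union> Gs b a2 c b2 \<union> Gs c a2 b2 c2 \<union>
      Gs c2 a2 b2 c \<union> Gs b2 a2 c b \<union> Gs a2 b c a \<union>
      frontier (convex hull {a, b, c}) \<union> frontier (convex hull {a2, b2, c2})"
  have e1: "convex hull {a2, b, c} = convex hull {b, a2, c}" "convex hull {a2, b2, c} = convex hull {c, a2, b2}"
    "convex hull {a2, b2, c2} = convex hull {c2, a2, b2}" "convex hull {a2, b2, c} = convex hull {b2, a2, c}"
    by (simp_all add: insert_commute)
  have ch3: "A - D \<subseteq> (A - B) \<union> (B - C) \<union> (C - D)" for A B C D :: "(real^2) set" by blast
  have q1: "convex hull {a2, b, c} - convex hull {a2, b2, c} = convex hull {b, a2, c} - convex hull {b2, a2, c}"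
    by (simp add: insert_commute)
  have q2: "convex hull {a2, b2, c} - convex hull {a2, b2, c2} = convex hull {c, a2, b2} - convex hull {c2, a2, b2}"
    by (simp add: insert_commute)
  have q3: "convex hull {a2, b2, c2} - convex hull {a2, b2, c} = convex hull {c2, a2, b2} - convex hull {c, a2, b2}"
    by (simp add: insert_commute)
  have q4: "convex hull {a2, b2, c} - convex hull {a2, b, c} = convex hull {b2, a2, c} - convex hull {b, a2, c}"
    by (simp add: insert_commute)
  have s1: "convex hull {a, b, c} - convex hull {a2, b2, c2} \<subseteq>
      Gs a b c a2 \<union> Gs b a2 c b2 \<union> Gs c a2 b2 c2"
  proof -
    have "convex hull {a, b, c} - convex hull {a2, b2, c2} \<subseteq>
      (convex hull {a, b, c} - convex hull {a2, b, c}) \<union> (convex hull {a2, b, c} - convex hull {a2, b2, c})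
      \<union> (convex hull {a2, b2, c} - convex hull {a2, b2, c2})" by (rule ch3)
    also have "\<dots> \<subseteq> Gs a b c a2 \<union> Gs b a2 c b2 \<union> Gs c a2 b2 c2"
      unfolding q1 q2 by (intro Un_mono Gs_step)
    finally show ?thesis .
  qed
  have s2: "convex hull {a2, b2, c2} - convex hull {a, b, c} \<subseteq>
      Gs c2 a2 b2 c \<union> Gs b2 a2 c b \<union> Gs a2 b c a"
  proof -
    have "convex hull {a2, b2, c2} - convex hull {a, b, c} \<subseteq>
      (convex hull {a2, b2, c2} - convex hull {a2, b2, c}) \<union> (convex hull {a2, b2, c} - convex hull {a2, b, c})
      \<union> (convex hull {a2, b, c} - convex hull {a, b, c})" by (rule ch3)
    also have "\<dots> \<subseteq> Gs c2 a2 b2 c \<union> Gs b2 a2 c b \<union> Gs a2 b c a"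
      unfolding q3 q4 by (intro Un_mono Gs_step)
    finally show ?thesis .
  qed
  have sd: "(I1 - I4) \<union> (I4 - I1) \<subseteq> ((A - D) \<union> (D - A)) \<union> ((A - I1) \<union> (D - I4))"
    if "I1 \<subseteq> A" "I4 \<subseteq> D" for I1 I4 A D :: "(real^2) set" using that by blast
  have "(interior (convex hull {a, b, c}) - interior (convex hull {a2, b2, c2})) \<union>
     (interior (convex hull {a2, b2, c2}) - interior (convex hull {a, b, c})) \<subseteq>
     ((convex hull {a, b, c} - convex hull {a2, b2, c2}) \<union> (convex hull {a2, b2, c2} - convex hull {a, b, c}))
     \<union> (frontier (convex hull {a, b, c}) \<union> frontier (convex hull {a2, b2, c2}))"
    unfolding frontier_tri[symmetric] by (intro sd interior_subset)
  also have "\<dots> \<subseteq> E" unfolding E_def using s1 s2 by blast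
  finally have inc: "(interior (convex hull {a, b, c}) - interior (convex hull {a2, b2, c2})) \<union>
     (interior (convex hull {a2, b2, c2}) - interior (convex hull {a, b, c})) \<subseteq> E" .
  have cb: "E \<subseteq> cball a 2"
  proof -
    have "x \<in> cball a 2" if "x \<in> {a, b, c, a2, b2, c2}" for x
      using P[OF _ that, of a] \<open>l \<le> 1/2\<close> \<open>d \<le> 1/2\<close> by (auto simp: dist_norm)
    then have M: "a \<in> cball a 2" "b \<in> cball a 2" "c \<in> cball a 2" "a2 \<in> cball a 2" "b2 \<in> cball a 2" "c2 \<in> cball a 2"
      by auto
    show ?thesis unfolding E_def by (intro Un_least Gs_sub fr_cball M)
  qed
  have me: "E \<in> lmeasurable \<and> measure lebesgue E \<le> 6 * (d * ?m)"
  proof -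
    have G: "Gs x y z w \<in> lmeasurable \<and> measure lebesgue (Gs x y z w) \<le> d * ?m"
      if "x \<in> {a, b, c, a2, b2, c2}" "y \<in> {a, b, c, a2, b2, c2}"
      "z \<in> {a, b, c, a2, b2, c2}" "norm (w - x) \<le> d" for x y z w
      using Gs_meas[OF that(4) P[OF that(2,1)] P[OF that(3,1)]] by blast
    have F: "frontier (convex hull {x, y, z::real^2}) \<in> lmeasurable \<and> measure lebesgue (frontier (convex hull {x, y, z})) \<le> 0" for x y z
    proof -
      have "frontier (convex hull {x, y, z}) \<subseteq> convex hull {x, y, z}" using frontier_tri by blast
      then have "frontier (convex hull {x, y, z}) \<in> lmeasurable"
        by (rule fmeasurableI2[OF hull_lmeas _ negligible_imp_sets[OF frontier_tri_neg]])
      then show ?thesis using negligible_imp_measure0[OF frontier_tri_neg] by simp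
    qed
    have g1: "Gs a b c a2 \<in> lmeasurable \<and> measure lebesgue (Gs a b c a2) \<le> d * ?m" by (rule G) (simp_all add: d)
    have g2: "Gs b a2 c b2 \<in> lmeasurable \<and> measure lebesgue (Gs b a2 c b2) \<le> d * ?m" by (rule G) (simp_all add: d)
    have g3: "Gs c a2 b2 c2 \<in> lmeasurable \<and> measure lebesgue (Gs c a2 b2 c2) \<le> d * ?m" by (rule G) (simp_all add: d)
    have g4: "Gs c2 a2 b2 c \<in> lmeasurable \<and> measure lebesgue (Gs c2 a2 b2 c) \<le> d * ?m" by (rule G) (simp_all add: dd)
    have g5: "Gs b2 a2 c b \<in> lmeasurable \<and> measure lebesgue (Gs b2 a2 c b) \<le> d * ?m" by (rule G) (simp_all add: dd)
    have g6: "Gs a2 b c a \<in> lmeasurable \<and> measure lebesgue (Gs a2 b c a) \<le> d * ?m" by (rule G) (simp_all add: dd)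
    note F1 = F[of a b c] and F2 = F[of a2 b2 c2]
    note u1 = Un_meas[OF g1[THEN conjunct1] g2[THEN conjunct1] g1[THEN conjunct2] g2[THEN conjunct2]]
    note u2 = Un_meas[OF u1(1) g3[THEN conjunct1] u1(2) g3[THEN conjunct2]]
    note u3 = Un_meas[OF u2(1) g4[THEN conjunct1] u2(2) g4[THEN conjunct2]]
    note u4 = Un_meas[OF u3(1) g5[THEN conjunct1] u3(2) g5[THEN conjunct2]]
    note u5 = Un_meas[OF u4(1) g6[THEN conjunct1] u4(2) g6[THEN conjunct2]]
    note u6 = Un_meas[OF u5(1) F1[THEN conjunct1] u5(2) F1[THEN conjunct2]]
    note u7 = Un_meas[OF u6(1) F2[THEN conjunct1] u6(2) F2[THEN conjunct2]]
    have "E \<in> lmeasurable" unfolding E_def by (rule u7(1))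
    moreover have "measure lebesgue E \<le> 6 * (d * ?m)" unfolding E_def using u7(2) by linarith
    ultimately show ?thesis by (rule conjI)
  qed
  show ?thesis by (rule that[OF inc cb me[THEN conjunct1] me[THEN conjunct2]])
qed



lemma cross_add_left: "cross (x + y) z = cross x z + cross y z"
  and cross_add_right: "cross z (x + y) = cross z x + cross z y"
  and cross_scale_left: "cross (r *\<^sub>R x) z = r * cross x z"
  and cross_scale_right: "cross z (r *\<^sub>R x) = r * cross z x"
  and cross_self: "cross x x = 0"
  by (simp_all add: cross_def algebra_simps)

lemma C1_vd:
  assumes "C1_Hol \<beta> \<gamma>" "t \<in> {0..1}"
  shows "(\<gamma> has_vector_derivative vderiv \<gamma> t) (at t within {0..1})"
  using assms unfolding C1_Hol_def vderiv_def by (simp add: vector_derivative_works[symmetric])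

lemma C1_cont:
  assumes "C1_Hol \<beta> \<gamma>"
  shows "continuous_on {0..1} \<gamma>"
proof -
  have "continuous (at t within {0..1}) \<gamma>" if "t \<in> {0..1}" for t
    using assms that unfolding C1_Hol_def by (blast intro: differentiable_imp_continuous_within)
  then show ?thesis by (simp add: continuous_on_eq_continuous_within)
qed

lemma C1_H:
  assumes "C1_Hol \<beta> \<gamma>"
  obtains H where "\<And>s t. s \<in> {0..1} \<Longrightarrow> t \<in> {0..1} \<Longrightarrow> norm (vderiv \<gamma> s - vderiv \<gamma> t) \<le> H * \<bar>s - t\<bar> powr \<beta>"
  using assms unfolding C1_Hol_def by blast

lemma C1_sup:
  assumes "C1_Hol \<beta> \<gamma>" "0 \<le> \<beta>" "t \<in> {0..1}"
  shows "norm (vderiv \<gamma> t) \<le> deriv_sup \<gamma>" "0 \<le> deriv_sup \<gamma>"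
proof -
  obtain H where H: "\<And>s t. s \<in> {0..1} \<Longrightarrow> t \<in> {0..1} \<Longrightarrow> norm (vderiv \<gamma> s - vderiv \<gamma> t) \<le> H * \<bar>s - t\<bar> powr \<beta>"
    using C1_H[OF assms(1)] by blast
  have b: "norm (vderiv \<gamma> t) \<le> norm (vderiv \<gamma> 0) + \<bar>H\<bar>" if "t \<in> {0..1}" for t
  proof -
    have p: "\<bar>t - 0\<bar> powr \<beta> \<le> 1" "0 \<le> \<bar>t - 0\<bar> powr \<beta>" using that assms(2) by (auto intro: powr_le1)
    have "H * \<bar>t - 0\<bar> powr \<beta> \<le> \<bar>H\<bar> * \<bar>t - 0\<bar> powr \<beta>"
      by (rule mult_right_mono) (use p in auto)
    also have "\<dots> \<le> \<bar>H\<bar> * 1"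
      by (rule mult_left_mono) (use p in auto)
    finally have "H * \<bar>t - 0\<bar> powr \<beta> \<le> \<bar>H\<bar>" by simp
    moreover have "norm (vderiv \<gamma> t) \<le> norm (vderiv \<gamma> 0) + norm (vderiv \<gamma> t - vderiv \<gamma> 0)"
      by (metis add.commute diff_add_cancel norm_triangle_ineq)
    ultimately show ?thesis using H[OF that, of 0] by simp
  qed
  have bdd: "bdd_above ((\<lambda>t. norm (vderiv \<gamma> t)) ` {0..1})"
    using b by (intro bdd_aboveI2) auto
  show "norm (vderiv \<gamma> t) \<le> deriv_sup \<gamma>"
    unfolding deriv_sup_def using bdd assms(3) by (rule cSUP_upper2) simp
  show "0 \<le> deriv_sup \<gamma>"
    unfolding deriv_sup_def using bdd by (rule cSUP_upper2[where x = 0]) auto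
qed

lemma C1_hol:
  assumes "C1_Hol \<beta> \<gamma>" "0 \<le> \<beta>" "s \<in> {0..1}" "t \<in> {0..1}"
  shows "norm (vderiv \<gamma> s - vderiv \<gamma> t) \<le> deriv_hol \<beta> \<gamma> * \<bar>s - t\<bar> powr \<beta>" "0 \<le> deriv_hol \<beta> \<gamma>"
proof -
  obtain H where H: "\<And>s t. s \<in> {0..1} \<Longrightarrow> t \<in> {0..1} \<Longrightarrow> norm (vderiv \<gamma> s - vderiv \<gamma> t) \<le> H * \<bar>s - t\<bar> powr \<beta>"
    using C1_H[OF assms(1)] by blast
  let ?P = "{(s,t). s \<in> {0..1::real} \<and> t \<in> {0..1::real} \<and> s \<noteq> t}"
  let ?f = "\<lambda>p. norm (vderiv \<gamma> (fst p) - vderiv \<gamma> (snd p)) / \<bar>fst p - snd p\<bar> powr \<beta>"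
  have fb: "?f p \<le> H" if "p \<in> ?P" for p
  proof -
    obtain x y where p0: "p = (x, y)" by (cases p)
    then have p: "p = (x, y)" "x \<in> {0..1}" "y \<in> {0..1}" "x \<noteq> y" using that by auto
    have "0 < \<bar>x - y\<bar> powr \<beta>" using p by simp
    then show ?thesis using H[OF p(2,3)] p(1) by (simp add: divide_le_eq)
  qed
  have bdd: "bdd_above (?f ` ?P)" using fb by (intro bdd_aboveI2) auto
  have f0: "0 \<le> ?f p" for p by simp
  have P01: "(0, 1) \<in> ?P" by simp
  show "0 \<le> deriv_hol \<beta> \<gamma>"
    unfolding deriv_hol_def using bdd P01 f0 by (rule cSUP_upper2) 
  show "norm (vderiv \<gamma> s - vderiv \<gamma> t) \<le> deriv_hol \<beta> \<gamma> * \<bar>s - t\<bar> powr \<beta>"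
  proof (cases "s = t")
    case True then show ?thesis by simp
  next
    case False
    then have st: "(s, t) \<in> ?P" using assms by simp
    have "?f (s, t) \<le> deriv_hol \<beta> \<gamma>" unfolding deriv_hol_def using bdd st by (rule cSUP_upper2) simp
    moreover have "0 < \<bar>s - t\<bar> powr \<beta>" using False by simp
    ultimately show ?thesis by (simp add: divide_le_eq)
  qed
qed

lemma onorm_vd: "onorm (\<lambda>h. h *\<^sub>R (v::real^2)) = norm v"
  using onorm_scaleR_left[of "\<lambda>x::real. x" v] by (simp add: onorm_id bounded_linear_ident)

lemma C1_lip:
  assumes "C1_Hol \<beta> \<gamma>" "0 \<le> \<beta>" "x \<in> {0..1}" "y \<in> {0..1}"
  shows "norm (\<gamma> x - \<gamma> y) \<le> deriv_sup \<gamma> * \<bar>x - y\<bar>"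
proof -
  have "norm (\<gamma> x - \<gamma> y) \<le> deriv_sup \<gamma> * norm (x - y)"
  proof (rule differentiable_bound[where f' = "\<lambda>t h. h *\<^sub>R vderiv \<gamma> t"])
    show "convex {0..1::real}" by simp
    show "(\<gamma> has_derivative (\<lambda>h. h *\<^sub>R vderiv \<gamma> t)) (at t within {0..1})" if "t \<in> {0..1}" for t
      using C1_vd[OF assms(1) that] by (simp add: has_vector_derivative_def)
    show "onorm (\<lambda>h. h *\<^sub>R vderiv \<gamma> t) \<le> deriv_sup \<gamma>" if "t \<in> {0..1}" for t
      using C1_sup[OF assms(1,2) that] by (simp add: onorm_vd)
  qed (use assms in auto)
  then show ?thesis by simp
qed

lemma C1_taylor:
  assumes "C1_Hol \<beta> \<gamma>" "0 \<le> \<beta>" "0 \<le> s" "s \<le> x" "x \<le> t" "t \<le> 1"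
  shows "norm (\<gamma> x - \<gamma> s - (x - s) *\<^sub>R vderiv \<gamma> s) \<le> (t - s) * (deriv_hol \<beta> \<gamma> * (t - s) powr \<beta>)"
proof -
  let ?B = "deriv_hol \<beta> \<gamma> * (t - s) powr \<beta>"
  have sub: "{s..t} \<subseteq> {0..1}" using assms by auto
  have "norm (\<gamma> x - \<gamma> s - (x - s) *\<^sub>R vderiv \<gamma> s) \<le> norm (x - s) * ?B"
  proof (rule vector_differentiable_bound_linearization[where S = "{s..t}" and f' = "vderiv \<gamma>"])
    show "(\<gamma> has_vector_derivative vderiv \<gamma> y) (at y within {s..t})" if "y \<in> {s..t}" for y
      using C1_vd[OF assms(1)] sub that by (meson has_vector_derivative_within_subset subsetD)
    show "closed_segment s x \<subseteq> {s..t}" using assms by (simp add: closed_segment_eq_real_ivl)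
    show "norm (vderiv \<gamma> y - vderiv \<gamma> s) \<le> ?B" if "y \<in> {s..t}" for y
    proof -
      have ys: "y \<in> {0..1}" "s \<in> {0..1}" using sub that assms by auto
      have "norm (vderiv \<gamma> y - vderiv \<gamma> s) \<le> deriv_hol \<beta> \<gamma> * \<bar>y - s\<bar> powr \<beta>"
        by (rule C1_hol(1)[OF assms(1,2) ys])
      also have "\<dots> \<le> ?B"
        using that assms(2) C1_hol(2)[OF assms(1,2), of 0 0]
        by (intro mult_left_mono powr_mono2) auto
      finally show ?thesis .
    qed
    show "s \<in> {s..t}" using assms by simp
  qed
  also have "\<dots> \<le> (t - s) * ?B"
    using assms C1_hol(2)[OF assms(1,2), of 0 0] by (intro mult_right_mono) auto
  finally show ?thesis .
qed

lemma C1_orient: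
  assumes "C1_Hol \<beta> \<gamma>" "0 \<le> \<beta>" "0 \<le> s" "s \<le> u" "u \<le> t" "t \<le> 1"
  shows "\<bar>orient (\<gamma> s) (\<gamma> u) (\<gamma> t)\<bar> \<le> 2 * (deriv_sup \<gamma> * deriv_hol \<beta> \<gamma>) * ((t - s)^2 * (t - s) powr \<beta>)"
proof -
  define v where "v = vderiv \<gamma> s"
  define h where "h = t - s"
  define E where "E = h * (deriv_hol \<beta> \<gamma> * h powr \<beta>)"
  define A where "A = deriv_sup \<gamma>"
  define e1 where "e1 = \<gamma> u - \<gamma> s - (u - s) *\<^sub>R v"
  define e2 where "e2 = \<gamma> t - \<gamma> s - (t - s) *\<^sub>R v"
  have s01: "s \<in> {0..1}" "t \<in> {0..1}" using assms by auto
  have ne1: "norm e1 \<le> E" unfolding e1_def E_def v_def h_def by (rule C1_taylor[OF assms(1-6)])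
  have ne2: "norm e2 \<le> E" unfolding e2_def E_def v_def h_def using assms by (intro C1_taylor[OF assms(1,2)]) auto
  have nv: "norm v \<le> A" unfolding v_def A_def using C1_sup[OF assms(1,2) s01(1)] by simp
  have nb: "norm (\<gamma> t - \<gamma> s) \<le> A * h" unfolding A_def h_def
    using C1_lip[OF assms(1,2) s01(2,1)] assms by simp
  have E0: "0 \<le> E" using ne1 norm_ge_zero order_trans by blast
  have A0: "0 \<le> A" using nv norm_ge_zero order_trans by blast
  have h0: "0 \<le> h" "u - s \<le> h" "0 \<le> u - s" using assms by (auto simp: h_def)
  have eq: "orient (\<gamma> s) (\<gamma> u) (\<gamma> t) = (u - s) * cross v e2 + cross e1 (\<gamma> t - \<gamma> s)"
  proof -
    have "\<gamma> u - \<gamma> s = (u - s) *\<^sub>R v + e1" "\<gamma> t - \<gamma> s = (t - s) *\<^sub>R v + e2"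
      by (simp_all add: e1_def e2_def)
    then show ?thesis unfolding orient_cross
      by (simp add: cross_add_left cross_add_right cross_scale_left cross_scale_right cross_self)
  qed
  have c1: "\<bar>(u - s) * cross v e2\<bar> \<le> h * (A * E)"
  proof -
    have "\<bar>cross v e2\<bar> \<le> A * E"
      by (rule order_trans[OF cross_bound mult_mono]) (use nv ne2 A0 in auto)
    then show ?thesis using h0 by (simp add: abs_mult mult_mono)
  qed
  have c2: "\<bar>cross e1 (\<gamma> t - \<gamma> s)\<bar> \<le> E * (A * h)"
    by (rule order_trans[OF cross_bound mult_mono]) (use ne1 nb E0 in auto)
  have "\<bar>orient (\<gamma> s) (\<gamma> u) (\<gamma> t)\<bar> \<le> h * (A * E) + E * (A * h)"
    unfolding eq using c1 c2 by linarith
  also have "\<dots> = 2 * (A * deriv_hol \<beta> \<gamma>) * (h^2 * h powr \<beta>)"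
    by (simp add: E_def power2_eq_square algebra_simps)
  finally show ?thesis by (simp add: A_def h_def)
qed



lemma half_gap: "\<bar>real_of_int k + 1/2 - real_of_int m\<bar> \<ge> 1/2"
proof (cases "m \<le> k")
  case True then have "real_of_int m \<le> real_of_int k" by simp
  then show ?thesis by simp
next
  case False then have "real_of_int m \<ge> real_of_int k + 1" by simp
  then show ?thesis by simp
qed

lemma round_le_const:
  fixes f :: "real \<Rightarrow> real"
  assumes cont: "continuous_on {0..1} f" and D: "D < 1/2"
    and close: "\<And>x. x \<in> {0..1} \<Longrightarrow> \<bar>f x - of_int (round (f x))\<bar> \<le> D"
    and xy: "x \<in> {0..1}" "y \<in> {0..1}"
  shows "\<not> round (f x) < round (f y)"
proof
  assume lt: "round (f x) < round (f y)"
  define k where "k = round (f x)"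
  have "round (f y) \<ge> k + 1" using lt by (simp add: k_def)
  then have ry: "real_of_int (round (f y)) \<ge> real_of_int k + 1" by (metis of_int_add of_int_le_iff of_int_1)
  have fx: "f x < real_of_int k + 1/2" using close[OF xy(1)] D by (simp add: k_def abs_le_iff)
  have fy: "f y > real_of_int k + 1/2" using close[OF xy(2)] D ry by (simp add: abs_le_iff)
  have "\<exists>z\<in>{0..1}. f z = real_of_int k + 1/2"
  proof (cases "x \<le> y")
    case True
    have "continuous_on {x..y} f" by (rule continuous_on_subset[OF cont]) (use xy in auto)
    then obtain z where "x \<le> z" "z \<le> y" "f z = real_of_int k + 1/2"
      using IVT'[of f x "real_of_int k + 1/2" y] fx fy True by auto
    then show ?thesis using xy by (intro bexI[of _ z]) auto
  next
    case False
    have "continuous_on {y..x} f" by (rule continuous_on_subset[OF cont]) (use xy in auto)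
    then obtain z where "y \<le> z" "z \<le> x" "f z = real_of_int k + 1/2"
      using IVT2'[of f x "real_of_int k + 1/2" y] fx fy False by auto
    then show ?thesis using xy by (intro bexI[of _ z]) auto
  qed
  then obtain z where z: "z \<in> {0..1}" "f z = real_of_int k + 1/2" by blast
  have "\<bar>f z - of_int (round (f z))\<bar> \<ge> 1/2" using half_gap[of k "round (f z)"] z(2) by simp
  then show False using close[OF z(1)] D by simp
qed

lemma round_const:
  fixes f :: "real \<Rightarrow> real"
  assumes "continuous_on {0..1} f" "D < 1/2"
    "\<And>x. x \<in> {0..1} \<Longrightarrow> \<bar>f x - of_int (round (f x))\<bar> \<le> D"
    "x \<in> {0..1}" "y \<in> {0..1}"
  shows "round (f x) = round (f y)"
  using round_le_const[OF assms(1-3) assms(4,5)] round_le_const[OF assms(1-3) assms(5,4)] by linarith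

lemma tdist_comp:
  assumes "tdist x y \<le> D"
  shows "\<bar>(x$i - y$i) - of_int (round (x$i - y$i))\<bar> \<le> D"
proof -
  let ?g = "\<lambda>j. (x$j - y$j - of_int (round (x$j - y$j)))^2"
  have "?g i \<le> ?g 1 + ?g 2" using exhaust_2[of i] by auto
  then have "sqrt (?g i) \<le> sqrt (?g 1 + ?g 2)" by (rule real_sqrt_le_mono)
  then show ?thesis using assms unfolding tdist_def sum_2 by simp
qed

lemma tdist_le1: "tdist x y \<le> 1"
proof -
  have h: "(z - of_int (round z))^2 \<le> 1/4" for z :: real
  proof -
    have "\<bar>z - of_int (round z)\<bar> \<le> 1/2" using of_int_round_abs_le[of z] by (simp add: abs_minus_commute)
    then have "\<bar>z - of_int (round z)\<bar>^2 \<le> (1/2)^2" by (intro power_mono) auto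
    moreover have "(1/2::real)^2 = 1/4" by (simp add: power2_eq_square)
    ultimately show ?thesis by simp
  qed
  have "(\<Sum>i\<in>UNIV. (x$i - y$i - of_int (round (x$i - y$i)))^2) \<le> 1"
    unfolding sum_2 using h[of "x$1 - y$1"] h[of "x$2 - y$2"] by linarith
  then show ?thesis unfolding tdist_def by simp
qed

lemma norm_l1: "norm (x::real^2) \<le> \<bar>x$1\<bar> + \<bar>x$2\<bar>"
  using norm_le_l1_cart[of x] by (simp add: sum_2)

lemma lift_diam:
  assumes "C1_Hol \<beta> \<gamma>" "tdiam_le \<gamma> (1/4)" "x \<in> {0..1}" "y \<in> {0..1}"
  shows "norm (\<gamma> x - \<gamma> y) \<le> 1/2"
proof -
  have comp: "\<bar>\<gamma> x $ i - \<gamma> y $ i\<bar> \<le> 1/4" for i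
  proof -
    let ?f = "\<lambda>z. \<gamma> z $ i - \<gamma> y $ i"
    have cont: "continuous_on {0..1} ?f"
      by (intro continuous_intros C1_cont[OF assms(1)])
    have cl: "\<bar>?f z - of_int (round (?f z))\<bar> \<le> 1/4" if "z \<in> {0..1}" for z
      using assms(2) that assms(4) unfolding tdiam_le_def by (intro tdist_comp) auto
    have "round (?f x) = round (?f y)" by (rule round_const[OF cont _ cl assms(3,4)]) simp
    then have "round (?f x) = 0" by simp
    then show ?thesis using cl[OF assms(3)] by simp
  qed
  have "norm (\<gamma> x - \<gamma> y) \<le> \<bar>(\<gamma> x - \<gamma> y)$1\<bar> + \<bar>(\<gamma> x - \<gamma> y)$2\<bar>" by (rule norm_l1)
  then show ?thesis using comp[of 1] comp[of 2] by simp
qed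

lemma tsup_facts:
  assumes "x \<in> {0..1}"
  shows "tdist (\<gamma> x) (\<gamma>' x) \<le> tsup_dist \<gamma> \<gamma>'" "0 \<le> tsup_dist \<gamma> \<gamma>'"
proof -
  have bdd: "bdd_above ((\<lambda>t. tdist (\<gamma> t) (\<gamma>' t)) ` {0..1})"
    using tdist_le1 by (intro bdd_aboveI2) auto
  show "tdist (\<gamma> x) (\<gamma>' x) \<le> tsup_dist \<gamma> \<gamma>'" unfolding tsup_dist_def
    using bdd assms by (rule cSUP_upper2) simp
  show "0 \<le> tsup_dist \<gamma> \<gamma>'" unfolding tsup_dist_def
    using bdd assms by (rule cSUP_upper2) (simp add: tdist_def sum_nonneg)
qed

lemma common_shift:
  assumes "C1_Hol \<beta> \<gamma>" "C1_Hol \<beta> \<gamma>'" "tsup_dist \<gamma> \<gamma>' < 1/4"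
  obtains k where "isint k" "\<And>x. x \<in> {0..1} \<Longrightarrow> norm (\<gamma>' x + k - \<gamma> x) \<le> 2 * tsup_dist \<gamma> \<gamma>'"
proof -
  let ?D = "tsup_dist \<gamma> \<gamma>'"
  define f where "f i z = \<gamma> z $ i - \<gamma>' z $ i" for i z
  have cont: "continuous_on {0..1} (f i)" for i
    unfolding f_def by (intro continuous_intros C1_cont[OF assms(1)] C1_cont[OF assms(2)])
  have cl: "\<bar>f i z - of_int (round (f i z))\<bar> \<le> ?D" if "z \<in> {0..1}" for i z
    unfolding f_def using tsup_facts(1)[OF that, of \<gamma> \<gamma>'] by (rule tdist_comp)
  define k :: "real^2" where "k = (\<chi> i. of_int (round (f i 0)))"
  have "isint k" unfolding isint_def k_def by simp
  moreover have "norm (\<gamma>' x + k - \<gamma> x) \<le> 2 * ?D" if x: "x \<in> {0..1}" for x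
  proof -
    have r: "round (f i x) = round (f i 0)" for i
      by (rule round_const[OF cont _ cl x]) (use assms(3) in auto)
    have c: "\<bar>(\<gamma>' x + k - \<gamma> x) $ i\<bar> \<le> ?D" for i
    proof -
      have "(\<gamma>' x + k - \<gamma> x) $ i = - (f i x - of_int (round (f i x)))"
        using r[of i] unfolding k_def f_def by simp
      then show ?thesis using cl[OF x, of i] by simp
    qed
    show ?thesis using norm_l1[of "\<gamma>' x + k - \<gamma> x"] c[of 1] c[of 2] by linarith
  qed
  ultimately show ?thesis using that by blast
qed

lemma ttri_shift:
  assumes "isint k"
  shows "ttri (a + k) (b + k) (c + k) = ttri a b c" "orient (a + k) (b + k) (c + k) = orient a b c"
proof -
  have eq: "{a + k, b + k, c + k} = (+) k ` {a, b, c}" by (auto simp: add.commute)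
  have "interior (convex hull {a + k, b + k, c + k}) = (+) k ` interior (convex hull {a, b, c})"
    unfolding eq by (simp only: convex_hull_translation interior_translation)
  then show "ttri (a + k) (b + k) (c + k) = ttri a b c"
    unfolding ttri_def using tproj_shift[OF assms] by (simp add: image_image add.commute)
  show "orient (a + k) (b + k) (c + k) = orient a b c" by (simp add: orient_def)
qed



lemma in_cb: "norm (b - a) \<le> 1/2 \<Longrightarrow> b \<in> cball (a::real^2) 2"
  by (simp add: dist_norm norm_minus_commute)

lemma tri_T0:
  fixes a b c a' b' c' :: "real^2"
  assumes "norm (b - a) \<le> 1/2" "norm (c - a) \<le> 1/2" "norm (b' - a') \<le> 1/2" "norm (c' - a') \<le> 1/2"
  shows "tri_dist a b c a' b' c' \<le> 49/2 * (\<bar>orient a b c\<bar> + \<bar>orient a' b' c'\<bar>)"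
    "0 \<le> tri_dist a b c a' b' c'"
proof -
  let ?E1 = "convex hull {a, b, c}" and ?E2 = "convex hull {a', b', c'}"
  have c1: "?E1 \<subseteq> cball a 2" using assms by (intro hull_sub_cball in_cb) auto
  have c2: "?E2 \<subseteq> cball a' 2" using assms by (intro hull_sub_cball in_cb) auto
  have m1: "measure lebesgue ?E1 = \<bar>orient a b c\<bar> / 2" by (rule tri_area)
  have m2: "measure lebesgue ?E2 = \<bar>orient a' b' c'\<bar> / 2" by (rule tri_area)
  have t1: "measure lebesgue (ttri a b c) \<le> 49 * measure lebesgue ?E1"
    unfolding ttri_def by (rule proj_bound1[OF subset_refl interior_subset c1 hull_lmeas])
  have t2: "measure lebesgue (ttri a' b' c') \<le> 49 * measure lebesgue ?E2"
    unfolding ttri_def by (rule proj_bound1[OF subset_refl interior_subset c2 hull_lmeas])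
  show "tri_dist a b c a' b' c' \<le> 49/2 * (\<bar>orient a b c\<bar> + \<bar>orient a' b' c'\<bar>)"
  proof (cases "orient a b c * orient a' b' c' > 0")
    case True
    have "measure lebesgue ((ttri a b c - ttri a' b' c') \<union> (ttri a' b' c' - ttri a b c))
        \<le> 49 * (measure lebesgue ?E1 + measure lebesgue ?E2)"
      by (rule proj_bound2[OF _ interior_subset c1 hull_lmeas interior_subset c2 hull_lmeas])
        (auto simp: ttri_def)
    then show ?thesis using True unfolding tri_dist_def m1 m2 by simp
  next
    case False
    then show ?thesis using t1 t2 unfolding tri_dist_def m1 m2 by simp
  qed
  show "0 \<le> tri_dist a b c a' b' c'" unfolding tri_dist_def by simp
qed

lemma fin_step:
  fixes t s X c :: real
  assumes "t \<le> 49/2 * s" "s \<le> c * X" "0 \<le> X" "49/2 * c \<le> 2940"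
  shows "t \<le> 2940 * X"
proof -
  have "49/2 * s \<le> 49/2 * (c * X)" using assms(2) by simp
  also have "\<dots> = (49/2 * c) * X" by simp
  also have "\<dots> \<le> 2940 * X" using assms(3,4) by (intro mult_right_mono)
  finally show ?thesis using assms(1) by linarith
qed

lemma tri_T2:
  fixes a b c a' b' c' :: "real^2"
  assumes L1: "norm (b - a) \<le> L1" "norm (c - a) \<le> L1" "norm (c - b) \<le> L1"
    and L2: "norm (b' - a') \<le> L2" "norm (c' - a') \<le> L2"
    and dm: "norm (b - a) \<le> 1/2" "norm (c - a) \<le> 1/2" "norm (c - b) \<le> 1/2"
       "norm (b' - a') \<le> 1/2" "norm (c' - a') \<le> 1/2"
    and D0: "0 \<le> D"
    and sh: "D < 1/4 \<Longrightarrow> \<exists>k. isint k \<and> norm (a' + k - a) \<le> 2 * D \<and> norm (b' + k - b) \<le> 2 * D \<and> norm (c' + k - c) \<le> 2 * D"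
  shows "tri_dist a b c a' b' c' \<le> 2940 * ((L1 + L2) * D)"
proof -
  let ?S = "orient a b c" and ?S' = "orient a' b' c'"
  have T0: "tri_dist a b c a' b' c' \<le> 49/2 * (\<bar>?S\<bar> + \<bar>?S'\<bar>)" using tri_T0(1)[OF dm(1,2,4,5)] .
  have L10: "0 \<le> L1" using L1(1) norm_ge_zero order_trans by blast
  have L20: "0 \<le> L2" using L2(1) norm_ge_zero order_trans by blast
  have S1: "\<bar>?S\<bar> \<le> L1 * (1/2)" by (rule orient_bound[OF L1(1) dm(2)])
  have S2: "\<bar>?S'\<bar> \<le> L2 * (1/2)" by (rule orient_bound[OF L2(1) dm(5)])
  have S1': "\<bar>?S\<bar> \<le> L1 * L1" by (rule orient_bound[OF L1(1) L1(2)])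
  have S2': "\<bar>?S'\<bar> \<le> L2 * L2" by (rule orient_bound[OF L2(1) L2(2)])
  have goal0: "(L1 + L2) * D \<ge> 0" using L10 L20 D0 by simp
  show ?thesis
  proof (cases "D < 1/4")
    case False
    have "L1 * (1/2) \<le> L1 * (2 * D)" "L2 * (1/2) \<le> L2 * (2 * D)"
      using False L10 L20 by (intro mult_left_mono; simp)+
    then have "\<bar>?S\<bar> + \<bar>?S'\<bar> \<le> 2 * ((L1 + L2) * D)" using S1 S2 by (simp add: algebra_simps)
    then show ?thesis using fin_step[OF T0 _ goal0, of 2] by simp
  next
    case True
    obtain k where k: "isint k" "norm (a' + k - a) \<le> 2 * D" "norm (b' + k - b) \<le> 2 * D" "norm (c' + k - c) \<le> 2 * D"
      using sh[OF True] by blast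
    define a2 where "a2 = a' + k"
    define b2 where "b2 = b' + k"
    define c2 where "c2 = c' + k"
    have sh1: "ttri a2 b2 c2 = ttri a' b' c'" "orient a2 b2 c2 = ?S'"
      unfolding a2_def b2_def c2_def using ttri_shift[OF k(1)] by simp_all
    show ?thesis
    proof (cases "L1 + L2 \<le> D")
      case True
      have "L1 * L1 \<le> L1 * D" "L2 * L2 \<le> L2 * D"
        using True L10 L20 by (intro mult_left_mono; simp)+
      then have "\<bar>?S\<bar> + \<bar>?S'\<bar> \<le> 1 * ((L1 + L2) * D)" using S1' S2' by (simp add: algebra_simps)
      then show ?thesis using fin_step[OF T0 _ goal0, of 1] by simp
    next
      case big: False
      show ?thesis
      proof (cases "?S * ?S' > 0")
        case pos: True
        define l where "l = min L1 (1/2)"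
        have l: "norm (b - a) \<le> l" "norm (c - a) \<le> l" "norm (c - b) \<le> l" "l \<le> 1/2"
          using L1 dm by (simp_all add: l_def)
        have d: "norm (a2 - a) \<le> 2 * D" "norm (b2 - b) \<le> 2 * D" "norm (c2 - c) \<le> 2 * D" "2 * D \<le> 1/2"
          using k True by (simp_all add: a2_def b2_def c2_def)
        obtain E where E: "(interior (convex hull {a, b, c}) - interior (convex hull {a2, b2, c2})) \<union>
            (interior (convex hull {a2, b2, c2}) - interior (convex hull {a, b, c})) \<subseteq> E"
          "E \<subseteq> cball a 2" "E \<in> lmeasurable" "measure lebesgue E \<le> 6 * ((2 * D) * (l + 2 * (2 * D)))"
          using chain_bound[OF d(1-3) l d(4)] by blast
        have "tri_dist a b c a' b' c' = measure lebesgue ((ttri a b c - ttri a2 b2 c2) \<union> (ttri a2 b2 c2 - ttri a b c))"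
          using pos unfolding tri_dist_def sh1 by simp
        also have "\<dots> \<le> 49 * measure lebesgue E"
          by (rule proj_bound1[OF _ E(1) E(2) E(3)]) (auto simp: ttri_def)
        also have "\<dots> \<le> 49 * (6 * ((2 * D) * (l + 2 * (2 * D))))" using E(4) by simp
        also have "\<dots> \<le> 2940 * ((L1 + L2) * D)"
        proof -
          have "l + 4 * D \<le> 5 * (L1 + L2)" using big L20 by (simp add: l_def min_def)
          then have "D * (l + 4 * D) \<le> D * (5 * (L1 + L2))" using D0 by (rule mult_left_mono)
          then show ?thesis by (simp add: algebra_simps)
        qed
        finally show ?thesis .
      next
        case npos: False
        have "\<bar>?S\<bar> + \<bar>?S'\<bar> = \<bar>?S - ?S'\<bar>" using npos
          by (cases "?S \<ge> 0"; cases "?S' \<ge> 0") (auto simp: mult_pos_neg mult_neg_pos, (smt (verit) mult_pos_pos mult_neg_neg)+)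
        also have "\<bar>?S - ?S'\<bar> \<le> 4 * ((L1 + L2) * D)"
        proof -
          have eq0: "?S - orient a2 b2 c2 = cross ((b - a) - (b2 - a2)) (c - a) + cross (b2 - a2) ((c - a) - (c2 - a2))"
            unfolding orient_cross by (simp add: cross_def algebra_simps)
          have eq: "?S - ?S' = cross ((b - a) - (b2 - a2)) (c - a) + cross (b2 - a2) ((c - a) - (c2 - a2))"
            using eq0 sh1(2) by simp
          have n1: "norm ((b - a) - (b2 - a2)) \<le> 4 * D"
          proof -
            have e: "(b - a) - (b2 - a2) = (a2 - a) - (b2 - b)" by (simp add: algebra_simps)
            have "norm ((b - a) - (b2 - a2)) \<le> norm (a2 - a) + norm (b2 - b)"
              unfolding e by (rule norm_triangle_ineq4)
            then show ?thesis using k unfolding a2_def b2_def by simp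
          qed
          have n2: "norm ((c - a) - (c2 - a2)) \<le> 4 * D"
          proof -
            have e: "(c - a) - (c2 - a2) = (a2 - a) - (c2 - c)" by (simp add: algebra_simps)
            have "norm ((c - a) - (c2 - a2)) \<le> norm (a2 - a) + norm (c2 - c)"
              unfolding e by (rule norm_triangle_ineq4)
            then show ?thesis using k unfolding a2_def c2_def by simp
          qed
          have n3: "norm (b2 - a2) \<le> L2" using L2(1) by (simp add: a2_def b2_def)
          have "\<bar>cross ((b - a) - (b2 - a2)) (c - a)\<bar> \<le> (4 * D) * L1"
            by (rule order_trans[OF cross_bound mult_mono]) (use n1 L1 D0 in auto)
          moreover have "\<bar>cross (b2 - a2) ((c - a) - (c2 - a2))\<bar> \<le> L2 * (4 * D)"
            by (rule order_trans[OF cross_bound mult_mono]) (use n2 n3 L20 in auto)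
          ultimately have "\<bar>?S - ?S'\<bar> \<le> (4 * D) * L1 + L2 * (4 * D)" unfolding eq by linarith
          then show ?thesis by (simp add: algebra_simps)
        qed
        finally show ?thesis using fin_step[OF T0 _ goal0, of 4] by simp
      qed
    qed
  qed
qed



lemma interp:
  fixes A x y T k :: real
  assumes "0 \<le> A" "0 \<le> x" "0 \<le> y" "0 < k" "k \<le> 1" "T \<le> A * x" "T \<le> A * y"
  shows "T \<le> A * (x powr k * y powr (1 - k))"
proof (cases "x \<le> y")
  case True
  have "x \<le> x powr k * y powr (1 - k)"
  proof (cases "x = 0")
    case True then show ?thesis by simp
  next
    case False
    then have "x = x powr k * x powr (1 - k)" using assms(2) by (simp add: powr_add[symmetric])
    also have "\<dots> \<le> x powr k * y powr (1 - k)"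
      using True assms by (intro mult_left_mono powr_mono2) auto
    finally show ?thesis .
  qed
  then have "A * x \<le> A * (x powr k * y powr (1 - k))" using assms(1) by (rule mult_left_mono)
  then show ?thesis using assms(6) by linarith
next
  case False
  have "y \<le> x powr k * y powr (1 - k)"
  proof (cases "y = 0")
    case True then show ?thesis by simp
  next
    case yne: False
    then have "y = y powr k * y powr (1 - k)" using assms(3) by (simp add: powr_add[symmetric])
    also have "\<dots> \<le> x powr k * y powr (1 - k)"
      using False assms by (intro mult_right_mono powr_mono2) auto
    finally show ?thesis .
  qed
  then have "A * y \<le> A * (x powr k * y powr (1 - k))" using assms(1) by (rule mult_left_mono)
  then show ?thesis using assms(7) by linarith
qed

lemma tri_interval:
  fixes \<gamma> \<gamma>' :: "real \<Rightarrow> real^2"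
  assumes b0: "0 \<le> \<beta>" and k: "0 < \<kappa>" "\<kappa> \<le> 1"
    and C: "C1_Hol \<beta> \<gamma>" "C1_Hol \<beta> \<gamma>'" and dm: "tdiam_le \<gamma> (1/4)" "tdiam_le \<gamma>' (1/4)"
    and st: "0 \<le> s" "s \<le> u" "u \<le> t" "t \<le> 1" "s < t"
  shows "tri_dist (\<gamma> s) (\<gamma> u) (\<gamma> t) (\<gamma>' s) (\<gamma>' u) (\<gamma>' t) \<le>
    2940 * ((t - s) powr (1 + (1 + \<beta>) * \<kappa>) *
      ((deriv_sup \<gamma> + deriv_sup \<gamma>') * (deriv_hol \<beta> \<gamma> + deriv_hol \<beta> \<gamma>') powr \<kappa> * tsup_dist \<gamma> \<gamma>' powr (1 - \<kappa>)))"
proof -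
  define A1 where "A1 = deriv_sup \<gamma>"
  define A2 where "A2 = deriv_sup \<gamma>'"
  define H1 where "H1 = deriv_hol \<beta> \<gamma>"
  define H2 where "H2 = deriv_hol \<beta> \<gamma>'"
  define D where "D = tsup_dist \<gamma> \<gamma>'"
  define h where "h = t - s"
  define q where "q = h^2 * h powr \<beta>"
  have h0: "0 < h" using st by (simp add: h_def)
  have s01: "s \<in> {0..1}" "u \<in> {0..1}" "t \<in> {0..1}" using st by auto
  have A10: "0 \<le> A1" unfolding A1_def using C1_sup(2)[OF C(1) b0 s01(1)] .
  have A20: "0 \<le> A2" unfolding A2_def using C1_sup(2)[OF C(2) b0 s01(1)] .
  have H10: "0 \<le> H1" unfolding H1_def using C1_hol(2)[OF C(1) b0 s01(1) s01(1)] .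
  have H20: "0 \<le> H2" unfolding H2_def using C1_hol(2)[OF C(2) b0 s01(1) s01(1)] .
  have D0: "0 \<le> D" unfolding D_def using tsup_facts(2)[OF s01(1)] .
  have q0: "0 \<le> q" unfolding q_def using h0 by simp
  let ?T = "tri_dist (\<gamma> s) (\<gamma> u) (\<gamma> t) (\<gamma>' s) (\<gamma>' u) (\<gamma>' t)"
  have diam: "norm (g y - g x) \<le> 1/2" if "g = \<gamma> \<or> g = \<gamma>'" "x \<in> {0..1}" "y \<in> {0..1}" for g x y
    using that lift_diam[OF C(1) dm(1)] lift_diam[OF C(2) dm(2)] by auto
  have X: "?T \<le> 49 * ((A1 + A2) * (H1 + H2) * q)"
  proof -
    have T0: "?T \<le> 49/2 * (\<bar>orient (\<gamma> s) (\<gamma> u) (\<gamma> t)\<bar> + \<bar>orient (\<gamma>' s) (\<gamma>' u) (\<gamma>' t)\<bar>)"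
      by (rule tri_T0(1)) (use diam s01 in auto)
    have o1: "\<bar>orient (\<gamma> s) (\<gamma> u) (\<gamma> t)\<bar> \<le> 2 * (A1 * H1) * q"
      unfolding A1_def H1_def q_def h_def by (rule C1_orient[OF C(1) b0 st(1-4)])
    have o2: "\<bar>orient (\<gamma>' s) (\<gamma>' u) (\<gamma>' t)\<bar> \<le> 2 * (A2 * H2) * q"
      unfolding A2_def H2_def q_def h_def by (rule C1_orient[OF C(2) b0 st(1-4)])
    have "A1 * H1 + A2 * H2 \<le> (A1 + A2) * (H1 + H2)"
      using A10 A20 H10 H20 by (simp add: algebra_simps)
    then have "(A1 * H1 + A2 * H2) * q \<le> ((A1 + A2) * (H1 + H2)) * q" using q0 by (rule mult_right_mono)
    then show ?thesis using T0 o1 o2 by (simp add: algebra_simps)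
  qed
  have Y: "?T \<le> 2940 * (((A1 * h) + (A2 * h)) * D)"
  proof (rule tri_T2)
    have l1: "norm (\<gamma> y - \<gamma> x) \<le> A1 * h" if "x \<in> {s..t}" "y \<in> {s..t}" for x y
    proof -
      have "norm (\<gamma> y - \<gamma> x) \<le> A1 * \<bar>y - x\<bar>" unfolding A1_def
        by (rule C1_lip[OF C(1) b0]) (use that st in auto)
      also have "\<dots> \<le> A1 * h" using that A10 by (intro mult_left_mono) (auto simp: h_def)
      finally show ?thesis .
    qed
    have l2: "norm (\<gamma>' y - \<gamma>' x) \<le> A2 * h" if "x \<in> {s..t}" "y \<in> {s..t}" for x y
    proof -
      have "norm (\<gamma>' y - \<gamma>' x) \<le> A2 * \<bar>y - x\<bar>" unfolding A2_def
        by (rule C1_lip[OF C(2) b0]) (use that st in auto)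
      also have "\<dots> \<le> A2 * h" using that A20 by (intro mult_left_mono) (auto simp: h_def)
      finally show ?thesis .
    qed
    show "norm (\<gamma> u - \<gamma> s) \<le> A1 * h" "norm (\<gamma> t - \<gamma> s) \<le> A1 * h" "norm (\<gamma> t - \<gamma> u) \<le> A1 * h"
      using st by (intro l1; simp)+
    show "norm (\<gamma>' u - \<gamma>' s) \<le> A2 * h" "norm (\<gamma>' t - \<gamma>' s) \<le> A2 * h"
      using st by (intro l2; simp)+
    show "norm (\<gamma> u - \<gamma> s) \<le> 1/2" "norm (\<gamma> t - \<gamma> s) \<le> 1/2" "norm (\<gamma> t - \<gamma> u) \<le> 1/2"
      "norm (\<gamma>' u - \<gamma>' s) \<le> 1/2" "norm (\<gamma>' t - \<gamma>' s) \<le> 1/2"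
      using diam s01 by auto
    show "0 \<le> D" by (rule D0)
    show "\<exists>k. isint k \<and> norm (\<gamma>' s + k - \<gamma> s) \<le> 2 * D \<and> norm (\<gamma>' u + k - \<gamma> u) \<le> 2 * D \<and> norm (\<gamma>' t + k - \<gamma> t) \<le> 2 * D"
      if "D < 1/4"
    proof -
      have "tsup_dist \<gamma> \<gamma>' < 1/4" using that by (simp add: D_def)
      then obtain k where "isint k" "\<And>x. x \<in> {0..1} \<Longrightarrow> norm (\<gamma>' x + k - \<gamma> x) \<le> 2 * tsup_dist \<gamma> \<gamma>'"
        using common_shift[OF C(1) C(2)] by blast
      then show ?thesis using s01 unfolding D_def by blast
    qed
  qed
  define A where "A = A1 + A2"
  define H where "H = H1 + H2"
  have A0: "0 \<le> A" and H0: "0 \<le> H" using A10 A20 H10 H20 by (simp_all add: A_def H_def)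
  have X': "?T \<le> 2940 * A * (H * q)"
  proof -
    have P: "0 \<le> A * (H * q)" using A0 H0 q0 by simp
    have "?T \<le> 49 * (A * (H * q))" using X unfolding A_def H_def by (simp add: mult.assoc)
    then have "?T \<le> 2940 * (A * (H * q))" using P by linarith
    then show ?thesis by (simp add: mult.assoc)
  qed
  have Y': "?T \<le> 2940 * A * (h * D)" using Y unfolding A_def by (simp add: algebra_simps)
  have I: "?T \<le> 2940 * A * ((H * q) powr \<kappa> * (h * D) powr (1 - \<kappa>))"
    by (rule interp[OF _ _ _ k X' Y']) (use A0 H0 q0 h0 D0 in auto)
  have "(H * q) powr \<kappa> * (h * D) powr (1 - \<kappa>) = h powr (1 + (1 + \<beta>) * \<kappa>) * (H powr \<kappa> * D powr (1 - \<kappa>))"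
  proof -
    have "h powr (2 + \<beta>) = h powr 2 * h powr \<beta>" by (rule powr_add)
    moreover have "h powr 2 = h^2" using h0 by (simp add: powr_numeral)
    ultimately have "q = h powr (2 + \<beta>)" unfolding q_def by simp
    then have "q powr \<kappa> = h powr ((2 + \<beta>) * \<kappa>)" by (simp add: powr_powr)
    moreover have "(H * q) powr \<kappa> = H powr \<kappa> * q powr \<kappa>" using H0 q0 by (intro powr_mult)
    moreover have "(h * D) powr (1 - \<kappa>) = h powr (1 - \<kappa>) * D powr (1 - \<kappa>)" using h0 D0 by (intro powr_mult)
    moreover have "h powr ((2 + \<beta>) * \<kappa>) * h powr (1 - \<kappa>) = h powr (1 + (1 + \<beta>) * \<kappa>)"
      by (simp add: powr_add[symmetric] algebra_simps)
    ultimately show ?thesis by (simp add: algebra_simps)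
  qed
  then show ?thesis using I unfolding A_def H_def A1_def A2_def H1_def H2_def D_def h_def
    by (simp add: algebra_simps)
qed



lemma loc_bound:
  fixes \<gamma> \<gamma>' :: "real \<Rightarrow> real^2"
  assumes b0: "0 \<le> \<beta>" and k: "0 < \<kappa>" "\<kappa> \<le> 1" and a: "0 < \<alpha>" "\<alpha> \<le> 1"
    and e: "2 \<le> \<alpha> * (1 + (1 + \<beta>) * \<kappa>)"
    and C: "C1_Hol \<beta> \<gamma>" "C1_Hol \<beta> \<gamma>'" and dm: "tdiam_le \<gamma> (1/4)" "tdiam_le \<gamma>' (1/4)"
    and st: "0 \<le> s" "s < t" "t \<le> 1"
  shows "loc_dist \<gamma> \<gamma>' s t powr \<alpha> \<le>
    2940 * ((t - s) * ((deriv_sup \<gamma> + deriv_sup \<gamma>') * (deriv_hol \<beta> \<gamma> + deriv_hol \<beta> \<gamma>') powr \<kappa>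
       * tsup_dist \<gamma> \<gamma>' powr (1 - \<kappa>)) powr (\<alpha> / 2))"
proof -
  define M where "M = (deriv_sup \<gamma> + deriv_sup \<gamma>') * (deriv_hol \<beta> \<gamma> + deriv_hol \<beta> \<gamma>') powr \<kappa>
       * tsup_dist \<gamma> \<gamma>' powr (1 - \<kappa>)"
  define e1 where "e1 = 1 + (1 + \<beta>) * \<kappa>"
  define B where "B = 2940 * ((t - s) powr e1 * M)"
  have s0: "s \<in> {0..1}" using st by simp
  have M0: "0 \<le> M" unfolding M_def
    using C1_sup(2)[OF C(1) b0 s0] C1_sup(2)[OF C(2) b0 s0] by simp
  have B0: "0 \<le> B" unfolding B_def using M0 by simp
  have each: "sqrt (tri_dist (\<gamma> s) (\<gamma> u) (\<gamma> t) (\<gamma>' s) (\<gamma>' u) (\<gamma>' t)) \<le> sqrt B" if "u \<in> {s..t}" for u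
  proof -
    have "tri_dist (\<gamma> s) (\<gamma> u) (\<gamma> t) (\<gamma>' s) (\<gamma>' u) (\<gamma>' t) \<le> B"
      unfolding B_def M_def e1_def using that st by (intro tri_interval[OF b0 k C dm]) auto
    then show ?thesis by (rule real_sqrt_le_mono)
  qed
  have ne: "{s..t} \<noteq> {}" using st by simp
  have L: "loc_dist \<gamma> \<gamma>' s t \<le> sqrt B" unfolding loc_dist_def
    using ne each by (rule cSUP_least)
  have bdd: "bdd_above ((\<lambda>u. sqrt (tri_dist (\<gamma> s) (\<gamma> u) (\<gamma> t) (\<gamma>' s) (\<gamma>' u) (\<gamma>' t))) ` {s..t})"
    using each by (intro bdd_aboveI2[where M = "sqrt B"]) auto
  have L0: "0 \<le> loc_dist \<gamma> \<gamma>' s t" unfolding loc_dist_def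
  proof (rule cSUP_upper2[OF bdd, of s])
    show "s \<in> {s..t}" using st by simp
    have "0 \<le> tri_dist (\<gamma> s) (\<gamma> s) (\<gamma> t) (\<gamma>' s) (\<gamma>' s) (\<gamma>' t)" unfolding tri_dist_def by simp
    then show "0 \<le> sqrt (tri_dist (\<gamma> s) (\<gamma> s) (\<gamma> t) (\<gamma>' s) (\<gamma>' s) (\<gamma>' t))" by simp
  qed
  have "loc_dist \<gamma> \<gamma>' s t powr \<alpha> \<le> sqrt B powr \<alpha>" using L0 L a by (intro powr_mono2) auto
  also have "sqrt B powr \<alpha> = B powr (\<alpha> / 2)"
    using B0 by (simp add: powr_half_sqrt[symmetric] powr_powr)
  also have "B powr (\<alpha> / 2) = 2940 powr (\<alpha> / 2) * (((t - s) powr e1) powr (\<alpha> / 2) * M powr (\<alpha> / 2))"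
    unfolding B_def using M0 by (simp add: powr_mult)
  also have "\<dots> \<le> 2940 * ((t - s) * M powr (\<alpha> / 2))"
  proof -
    have c1: "(2940::real) powr (\<alpha> / 2) \<le> 2940 powr 1" using a by (intro powr_mono) auto
    have c2: "((t - s) powr e1) powr (\<alpha> / 2) \<le> (t - s) powr 1"
    proof -
      have "((t - s) powr e1) powr (\<alpha> / 2) = (t - s) powr (e1 * (\<alpha> / 2))" by (simp add: powr_powr)
      also have "\<dots> \<le> (t - s) powr 1"
      proof (rule powr_mono')
        have "e1 * (\<alpha> / 2) = (\<alpha> * (1 + (1 + \<beta>) * \<kappa>)) / 2" unfolding e1_def by simp
        then show "1 \<le> e1 * (\<alpha> / 2)" using e by linarith
      qed (use st in auto)
      finally show ?thesis .
    qed
    have "((t - s) powr e1) powr (\<alpha> / 2) * M powr (\<alpha> / 2) \<le> (t - s) * M powr (\<alpha> / 2)"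
      using c2 st by (intro mult_right_mono) auto
    then show ?thesis by (rule mult_mono[OF c1[simplified]]) simp_all
  qed
  finally show ?thesis unfolding M_def .
qed

theorem proposition3p20:
  shows "\<exists>C>0. \<forall>(\<alpha>::real) (\<beta>::real) (\<kappa>::real) (\<gamma>::real \<Rightarrow> real^2) (\<gamma>'::real \<Rightarrow> real^2).
     \<alpha> \<in> {2/3..1} \<and> \<beta> \<in> {2/\<alpha> - 2..1} \<and> \<kappa> \<in> {(2-\<alpha>)/(\<alpha>*(1+\<beta>))..1} \<and>
     C1_Hol \<beta> \<gamma> \<and> C1_Hol \<beta> \<gamma>' \<and> tdiam_le \<gamma> (1/4) \<and> tdiam_le \<gamma>' (1/4) \<longrightarrow>
     pvar \<alpha> \<gamma> \<gamma>' \<le> ereal (C * ((deriv_sup \<gamma> + deriv_sup \<gamma>')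
        * (deriv_hol \<beta> \<gamma> + deriv_hol \<beta> \<gamma>') powr \<kappa>
        * tsup_dist \<gamma> \<gamma>' powr (1 - \<kappa>)) powr (\<alpha>/2))"
proof (intro exI[of _ 2940] conjI allI impI)
  show "(0::real) < 2940" by simp
  fix \<alpha> \<beta> \<kappa> :: real and \<gamma> \<gamma>' :: "real \<Rightarrow> real^2"
  assume H: "\<alpha> \<in> {2/3..1} \<and> \<beta> \<in> {2/\<alpha> - 2..1} \<and> \<kappa> \<in> {(2-\<alpha>)/(\<alpha>*(1+\<beta>))..1} \<and>
     C1_Hol \<beta> \<gamma> \<and> C1_Hol \<beta> \<gamma>' \<and> tdiam_le \<gamma> (1/4) \<and> tdiam_le \<gamma>' (1/4)"
  then have a: "0 < \<alpha>" "\<alpha> \<le> 1" and C: "C1_Hol \<beta> \<gamma>" "C1_Hol \<beta> \<gamma>'"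
    and dm: "tdiam_le \<gamma> (1/4)" "tdiam_le \<gamma>' (1/4)" and k1: "\<kappa> \<le> 1"
    and bl: "2/\<alpha> - 2 \<le> \<beta>" and kl: "(2-\<alpha>)/(\<alpha>*(1+\<beta>)) \<le> \<kappa>" by auto
  have "2 \<le> 2 / \<alpha>" using a by (simp add: le_divide_eq)
  then have b0: "0 \<le> \<beta>" using bl by linarith
  have ab: "0 < \<alpha> * (1 + \<beta>)" using a b0 by simp
  have k0: "0 < \<kappa>" using kl a ab by (smt (verit) divide_pos_pos)
  have "2 - \<alpha> \<le> \<kappa> * (\<alpha> * (1 + \<beta>))" using kl ab by (simp add: divide_le_eq)
  then have e: "2 \<le> \<alpha> * (1 + (1 + \<beta>) * \<kappa>)" by (simp add: algebra_simps)
  define M where "M = ((deriv_sup \<gamma> + deriv_sup \<gamma>') * (deriv_hol \<beta> \<gamma> + deriv_hol \<beta> \<gamma>') powr \<kappa>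
       * tsup_dist \<gamma> \<gamma>' powr (1 - \<kappa>)) powr (\<alpha> / 2)"
  have M0: "0 \<le> M" unfolding M_def by simp
  show "pvar \<alpha> \<gamma> \<gamma>' \<le> ereal (2940 * ((deriv_sup \<gamma> + deriv_sup \<gamma>')
        * (deriv_hol \<beta> \<gamma> + deriv_hol \<beta> \<gamma>') powr \<kappa>
        * tsup_dist \<gamma> \<gamma>' powr (1 - \<kappa>)) powr (\<alpha>/2))"
    unfolding pvar_def M_def[symmetric]
  proof (rule SUP_least)
    fix ts assume ts: "ts \<in> partitions01"
    let ?n = "length ts"
    have sw: "sorted_wrt (<) ts" and ne: "ts \<noteq> []" and hd: "hd ts = 0" and lst: "last ts = 1"
      using ts unfolding partitions01_def by auto
    have t0: "ts ! 0 = 0" using hd ne by (simp add: hd_conv_nth)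
    have t1: "ts ! (?n - 1) = 1" using lst ne by (simp add: last_conv_nth)
    have mono: "ts ! i < ts ! j" if "i < j" "j < ?n" for i j
      using sorted_wrt_nth_less[OF sw that] .
    have rng: "0 \<le> ts ! i \<and> ts ! i \<le> 1" if "i < ?n" for i
    proof
      show "0 \<le> ts ! i" using t0 mono[of 0 i] that by (cases "i = 0") auto
      show "ts ! i \<le> 1"
      proof (cases "i = ?n - 1")
        case True then show ?thesis using t1 by simp
      next
        case False
        then have "i < ?n - 1" using that by linarith
        then show ?thesis using t1 mono[of i "?n - 1"] ne by simp
      qed
    qed
    have step: "loc_dist \<gamma> \<gamma>' (ts ! i) (ts ! (i + 1)) powr \<alpha> \<le> 2940 * ((ts ! (Suc i) - ts ! i) * M)"
      if "i < ?n - 1" for i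
    proof -
      have "0 \<le> ts ! i" "ts ! i < ts ! (i + 1)" "ts ! (i + 1) \<le> 1"
        using rng[of i] rng[of "i + 1"] mono[of i "i + 1"] that by auto
      then show ?thesis unfolding M_def
        using loc_bound[OF b0 k0 k1 a e C dm] by simp
    qed
    have "(\<Sum>i<?n - 1. loc_dist \<gamma> \<gamma>' (ts ! i) (ts ! (i + 1)) powr \<alpha>)
        \<le> (\<Sum>i<?n - 1. 2940 * ((ts ! (Suc i) - ts ! i) * M))"
      using step by (intro sum_mono) auto
    also have "\<dots> = 2940 * M * (\<Sum>i<?n - 1. ts ! (Suc i) - ts ! i)"
      by (simp add: sum_distrib_left algebra_simps)
    also have "(\<Sum>i<?n - 1. ts ! (Suc i) - ts ! i) = ts ! (?n - 1) - ts ! 0"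
      by (rule sum_lessThan_telescope)
    also have "2940 * M * (ts ! (?n - 1) - ts ! 0) = 2940 * M" using t0 t1 by simp
    finally show "ereal (\<Sum>i<?n - 1. loc_dist \<gamma> \<gamma>' (ts ! i) (ts ! (i + 1)) powr \<alpha>) \<le> ereal (2940 * M)"
      by simp
  qed
qed

end
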